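(* Let $N\in\mathbb{N}$, $K\in\mathbb{N}$ with $K<N$, and let $h,p_1,\dots,p_T\in[0,1]$ satisfy $$h=\sum_{i=1}^T p_i\le \frac{K-\sqrt K}{N}.$$ Let $X_1,\dots,X_T$ be independent random variables with $X_i\sim\mathrm{Bin}(N,p_i)$. Then $$\mathbb{P}\Big(\bigvee_{i=1}^T (X_i>K)\Big)\le\left(\frac{eNh}{K}\right)^K e^{-Nh}.$$
   Context: $\mathrm{Bin}(n,p)$ denotes the binomial distribution with $n$ trials and success probability $p$. *)

theory Defs
  imports "HOL-Probability.Probability"
begin

end

theory Submission
  imports Defs
begin

lemma binom_sum_pow:
  fixes p r :: real
  assumes "p \<in> {0..1}"
  shows "(\<Sum>k\<le>N. pmf (binomial_pmf N p) k * r ^ k) = (1 + p * (r - 1)) ^ N"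
proof -
  have "(\<Sum>k\<le>N. pmf (binomial_pmf N p) k * r ^ k)
      = (\<Sum>k\<le>N. real (N choose k) * (p * r) ^ k * (1 - p) ^ (N - k))"
    using assms by (intro sum.cong) (auto simp: pmf_binomial power_mult_distrib)
  also have "\<dots> = (p * r + (1 - p)) ^ N" by (subst binomial_ring) simp
  also have "p * r + (1 - p) = 1 + p * (r - 1)" by (simp add: algebra_simps)
  finally show ?thesis .
qed

lemma binom_tail:
  fixes p r :: real
  assumes p: "p \<in> {0..1}" and r: "r > 1" and K: "K > 0"
  shows "measure_pmf.prob (binomial_pmf N p) {k. K < k} \<le> ((1 + p * (r - 1)) ^ N - 1) / (r ^ K - 1)"
proof -
  let ?B = "binomial_pmf N p"
  let ?A = "{k. K < k}"
  have rK: "r ^ K > 1" using r K by (simp add: one_less_power)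
  have "measure_pmf.prob ?B ?A = measure_pmf.prob ?B (?A \<inter> set_pmf ?B)"
    by (simp add: measure_Int_set_pmf)
  also have "\<dots> \<le> measure_pmf.prob ?B (?A \<inter> {..N})"
    by (intro measure_pmf.finite_measure_mono) (use p in \<open>auto simp: set_pmf_binomial_eq split: if_splits\<close>)
  also have "\<dots> = (\<Sum>k\<in>?A \<inter> {..N}. pmf ?B k)"
    by (rule measure_measure_pmf_finite) auto
  also have "\<dots> \<le> (\<Sum>k\<in>?A \<inter> {..N}. pmf ?B k * ((r ^ k - 1) / (r ^ K - 1)))"
  proof (intro sum_mono)
    fix k assume "k \<in> ?A \<inter> {..N}"
    hence "r ^ K \<le> r ^ k" using r by (intro power_increasing) auto
    hence "1 \<le> (r ^ k - 1) / (r ^ K - 1)" using rK by simp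
    thus "pmf ?B k \<le> pmf ?B k * ((r ^ k - 1) / (r ^ K - 1))"
      using pmf_nonneg[of ?B k] by (metis mult.right_neutral mult_left_mono)
  qed
  also have "\<dots> \<le> (\<Sum>k\<le>N. pmf ?B k * ((r ^ k - 1) / (r ^ K - 1)))"
  proof (intro sum_mono2)
    fix k assume "k \<in> {..N} - ?A \<inter> {..N}"
    have "1 \<le> r ^ k" using r by simp
    thus "0 \<le> pmf ?B k * ((r ^ k - 1) / (r ^ K - 1))" using rK by simp
  qed auto
  also have "\<dots> = ((\<Sum>k\<le>N. pmf ?B k * r ^ k) - (\<Sum>k\<le>N. pmf ?B k * 1 ^ k)) / (r ^ K - 1)"
    by (simp add: sum_divide_distrib[symmetric] sum_subtractf[symmetric] algebra_simps)
  also have "\<dots> = ((1 + p * (r - 1)) ^ N - 1) / (r ^ K - 1)"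
    unfolding binom_sum_pow[OF p] by simp
  finally show ?thesis .
qed

lemma exp_sum_super:
  fixes a :: "nat \<Rightarrow> real"
  assumes "finite I" "\<And>i. i \<in> I \<Longrightarrow> a i \<ge> 0"
  shows "(\<Sum>i\<in>I. exp (a i) - 1) \<le> exp (\<Sum>i\<in>I. a i) - 1"
  using assms
proof (induction I rule: finite_induct)
  case (insert x F)
  have IH: "(\<Sum>i\<in>F. exp (a i) - 1) \<le> exp (\<Sum>i\<in>F. a i) - 1" using insert by auto
  have "0 \<le> (exp (a x) - 1) * (exp (\<Sum>i\<in>F. a i) - 1)"
    using insert by (intro mult_nonneg_nonneg) (auto intro: sum_nonneg)
  thus ?case using insert IH by (simp add: exp_add algebra_simps)
qed simp

theorem lemma10:
  fixes M :: "'a measure" and X :: "nat \<Rightarrow> 'a \<Rightarrow> nat"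
    and N K T :: nat and h :: real and p :: "nat \<Rightarrow> real"
  assumes "prob_space M"
    and "K < N"
    and "h \<in> {0..1}"
    and "\<And>i. i \<in> {1..T} \<Longrightarrow> p i \<in> {0..1}"
    and "h = (\<Sum>i=1..T. p i)"
    and "h \<le> (real K - sqrt (real K)) / real N"
    and "prob_space.indep_vars M (\<lambda>_. count_space UNIV) X {1..T}"
    and "\<And>i. i \<in> {1..T} \<Longrightarrow>
           distr M (count_space UNIV) (X i) = measure_pmf (binomial_pmf N (p i))"
  shows "measure M {\<omega> \<in> space M. \<exists>i\<in>{1..T}. X i \<omega> > K}
           \<le> (exp 1 * real N * h / real K) ^ K * exp (- real N * h)"
proof -
  interpret prob_space M by fact
  note p = assms(4)
  have rv: "X i \<in> measurable M (count_space UNIV)" if "i \<in> {1..T}" for i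
    using assms(7) that unfolding indep_vars_def by auto
  define E where "E i = {\<omega> \<in> space M. K < X i \<omega>}" for i
  have E_eq: "measure M (E i) = measure_pmf.prob (binomial_pmf N (p i)) {k. K < k}"
    if i: "i \<in> {1..T}" for i
  proof -
    have "measure M (E i) = measure (distr M (count_space UNIV) (X i)) {k. K < k}"
      using rv[OF i] by (subst measure_distr) (auto simp: E_def vimage_def Int_def conj_commute)
    thus ?thesis using assms(8)[OF i] by simp
  qed
  have Esets: "E i \<in> sets M" if "i \<in> {1..T}" for i
    using rv[OF that] unfolding E_def by measurable
  have "{\<omega> \<in> space M. \<exists>i\<in>{1..T}. X i \<omega> > K} = (\<Union>i\<in>{1..T}. E i)"
    by (auto simp: E_def)
  hence "measure M {\<omega> \<in> space M. \<exists>i\<in>{1..T}. X i \<omega> > K} \<le> (\<Sum>i=1..T. measure M (E i))"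
    using measure_UNION_le[of "{1..T}" E M] Esets by simp
  also have "\<dots> = (\<Sum>i=1..T. measure_pmf.prob (binomial_pmf N (p i)) {k. K < k})"
    by (intro sum.cong) (auto simp: E_eq)
  finally have U: "measure M {\<omega> \<in> space M. \<exists>i\<in>{1..T}. X i \<omega> > K}
     \<le> (\<Sum>i=1..T. measure_pmf.prob (binomial_pmf N (p i)) {k. K < k})" .
  show ?thesis
  proof (cases "h = 0")
    case True
    have "p i = 0" if "i \<in> {1..T}" for i
      using True assms(5) p sum_nonneg_eq_0_iff[of "{1..T}" p] that by auto
    hence "(\<Sum>i=1..T. measure_pmf.prob (binomial_pmf N (p i)) {k. K < k}) = 0"
      by (intro sum.neutral) (auto simp: measure_Int_set_pmf[symmetric])
    moreover have "(0::real) \<le> 0 ^ K" by simp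
    ultimately show ?thesis using U True by (cases K) auto
  next
    case False
    hence hpos: "h > 0" using assms(3) by auto
    have N: "N > 0" using assms(2) by simp
    have K: "K > 0"
    proof (rule ccontr)
      assume "\<not> K > 0"
      hence "K = 0" by simp
      thus False using assms(6) hpos by simp
    qed
    have "sqrt (real K) \<ge> 1" using K by simp
    moreover have "real N * h \<le> real K - sqrt (real K)" using assms(6) N by (simp add: field_simps)
    ultimately have NhK: "real N * h < real K" by linarith
    define x where "x = real N * h / real K"
    have x0: "x > 0" using x_def hpos N K by simp
    have x1: "x < 1" using x_def NhK K by simp
    define r where "r = 1 / x"
    have r1: "r > 1" unfolding r_def using x0 x1 by simp
    have rK: "r ^ K > 1" using r1 K by simp
    define a where "a i = real N * p i * (r - 1)" for i
    have a0: "a i \<ge> 0" if "i \<in> {1..T}" for i using p[OF that] r1 a_def by simp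
    have "(\<Sum>i=1..T. measure_pmf.prob (binomial_pmf N (p i)) {k. K < k})
        \<le> (\<Sum>i=1..T. (exp (a i) - 1) / (r ^ K - 1))"
    proof (intro sum_mono)
      fix i assume i: "i \<in> {1..T}"
      have "(1 + p i * (r - 1)) ^ N \<le> exp (p i * (r - 1)) ^ N"
        using p[OF i] r1 by (intro power_mono) (auto simp: exp_ge_add_one_self)
      also have "\<dots> = exp (a i)" by (simp add: a_def exp_of_nat_mult[symmetric] mult.assoc)
      finally have "((1 + p i * (r - 1)) ^ N - 1) / (r ^ K - 1) \<le> (exp (a i) - 1) / (r ^ K - 1)"
        using rK by (intro divide_right_mono) auto
      thus "measure_pmf.prob (binomial_pmf N (p i)) {k. K < k} \<le> (exp (a i) - 1) / (r ^ K - 1)"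
        using binom_tail[OF p[OF i] r1 K, of N] by linarith
    qed
    also have "\<dots> = (\<Sum>i=1..T. exp (a i) - 1) / (r ^ K - 1)"
      by (simp add: sum_divide_distrib)
    also have "\<dots> \<le> (exp (\<Sum>i=1..T. a i) - 1) / (r ^ K - 1)"
      using rK exp_sum_super[of "{1..T}" a] a0 by (intro divide_right_mono) auto
    also have "(\<Sum>i=1..T. a i) = real K - real N * h"
    proof -
      have "(\<Sum>i=1..T. a i) = real N * h * (r - 1)"
        by (simp add: a_def assms(5) sum_distrib_left sum_distrib_right mult.assoc)
      also have "\<dots> = real K - real N * h" using K x0 hpos N by (simp add: r_def x_def field_simps)
      finally show ?thesis .
    qed
    also have "(exp (real K - real N * h) - 1) / (r ^ K - 1) \<le> exp (real K - real N * h) / r ^ K"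
    proof -
      have "ln x \<le> x - 1" using x0 by (rule ln_le_minus_one)
      hence "real K * (1 - x) \<le> real K * (- ln x)" by (intro mult_left_mono) auto
      also have "- ln x = ln r" using x0 by (simp add: r_def ln_div)
      finally have "real K * (1 - x) \<le> real K * ln r" .
      hence "exp (real K * (1 - x)) \<le> exp (real K * ln r)" by simp
      also have "exp (real K * ln r) = r ^ K" using r1 by (simp add: exp_of_nat_mult exp_ln)
      also have "real K * (1 - x) = real K - real N * h" using K by (simp add: x_def field_simps)
      finally have le: "exp (real K - real N * h) \<le> r ^ K" .
      show ?thesis using rK le by (simp add: divide_simps) (simp add: algebra_simps)
    qed
    also have "exp (real K - real N * h) / r ^ K = (exp 1 * real N * h / real K) ^ K * exp (- real N * h)"
    proof -
      have "exp (real K - real N * h) = exp 1 ^ K * exp (- real N * h)"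
        by (simp add: exp_diff exp_of_nat_mult[symmetric] exp_minus field_simps)
      moreover have "1 / r ^ K = x ^ K" by (simp add: r_def power_one_over)
      moreover have "(exp 1 * real N * h / real K) ^ K = exp 1 ^ K * x ^ K"
        by (simp add: x_def power_mult_distrib[symmetric] mult.assoc)
      ultimately show ?thesis
        by (metis (no_types, lifting) divide_inverse inverse_eq_divide mult.assoc mult.commute)
    qed
    finally show ?thesis using U by linarith
  qed
qed

end
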